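(* Let $L$ spin-orbitals be indexed by $\{1,\dots,L\}$ and $1\le N_{\mathrm{occ}}<L$; o-operators are $\hat a^\dagger_p,\hat a_p$ with $p\le N_{\mathrm{occ}}$, v-operators those with $p>N_{\mathrm{occ}}$. Let $\hat C$ be a chain (product, in a fixed order) of $n\ge1$ excitation operators $\hat E^a_i=\hat a^\dagger_a\hat a_i$ and $n$ deexcitation operators $\hat D^i_a=\hat a^\dagger_i\hat a_a$ ($i\le N_{\mathrm{occ}}<a$), viewed as a chain of $4n$ elementary operators by expanding each (de)excitation operator into its two factors. Let $S=s_1\cdots s_{2n}$ be the word obtained from $\hat C$ by replacing each deexcitation operator by "(" and each excitation operator by ")", and suppose $S$ is a Dyck word. For $0\le k\le 2n$ let $d_k$ be the number of "(" minus the number of ")" among $s_1,\dots,s_k$, and let $(d^\uparrow_1,\dots,d^\uparrow_n)$ be the list of the values $d_k$ at those positions $k$ with $s_k=$ "(" (the opening depths). Define $\mathcal W(\hat C)$ as the number of partitions of the $4n$ elementary operators of $\hat C$ into $2n$ pairs such that every pair $(x,y)$, with $x$ to the left of $y$ in the chain, is either an o-creation operator $x$ with an o-annihilation operator $y$, or a v-annihilation operator $x$ with a v-creation operator $y$. Then $$\mathcal W(\hat C)=\Big(\prod_{k=1}^n d^\uparrow_k\Big)^2.$$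
   Context: A Dyck word is a finite word over $\{(,)\}$ with as many opening as closing brackets, every prefix of which contains at least as many opening as closing brackets. Motivation: a partition into pairs is a full contraction in the sense of Wick's theorem relative to the Fermi vacuum (Slater determinant with spin-orbitals $1,\dots,N_{\mathrm{occ}}$ occupied); the pairs allowed in the definition of $\mathcal W$ are exactly those contractions whose Fermi-vacuum value is not forced to vanish by the contraction rules $\langle \hat a^\dagger_r\hat a_s\rangle=\delta_{rs}n_rn_s$, $\langle \hat a_s\hat a^\dagger_r\rangle=\delta_{rs}(1-n_r)(1-n_s)$ (contractions of two creation or two annihilation operators vanish), so $\mathcal W(\hat C)$ counts the "well" full contractions. *)

theory Defs
  imports Main
begin

text \<open>(De)excitation operators. Exc i a is E^a_i = a^dag_a a_i; Deexc i a is D^i_a = a^dag_i a_a.\<close>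
datatype exop = Exc nat nat | Deexc nat nat

text \<open>Elementary operator: (is_creation, spin-orbital index).\<close>
type_synonym elop = "bool \<times> nat"

fun expand :: "exop \<Rightarrow> elop list" where
  "expand (Exc i a) = [(True, a), (False, i)]"
| "expand (Deexc i a) = [(True, i), (False, a)]"

definition elems :: "exop list \<Rightarrow> elop list" where
  "elems C = concat (map expand C)"

fun valid_exop :: "nat \<Rightarrow> nat \<Rightarrow> exop \<Rightarrow> bool" where
  "valid_exop L Nocc (Exc i a) = (1 \<le> i \<and> i \<le> Nocc \<and> Nocc < a \<and> a \<le> L)"
| "valid_exop L Nocc (Deexc i a) = (1 \<le> i \<and> i \<le> Nocc \<and> Nocc < a \<and> a \<le> L)"

fun is_deexc :: "exop \<Rightarrow> bool" where
  "is_deexc (Deexc _ _) = True"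
| "is_deexc (Exc _ _) = False"

text \<open>Bracket word: True = opening bracket (deexcitation), False = closing (excitation).\<close>
definition bracket_word :: "exop list \<Rightarrow> bool list" where
  "bracket_word C = map is_deexc C"

definition depth :: "bool list \<Rightarrow> nat \<Rightarrow> int" where
  "depth w k = int (length (filter id (take k w))) - int (length (filter Not (take k w)))"

definition dyck :: "bool list \<Rightarrow> bool" where
  "dyck w \<longleftrightarrow> (\<forall>k \<le> length w. depth w k \<ge> 0) \<and> depth w (length w) = 0"

text \<open>Opening depths d_k at 1-based positions k with s_k an opening bracket.\<close>
definition opening_depths :: "bool list \<Rightarrow> int list" where
  "opening_depths w = [depth w (k + 1). k \<leftarrow> [0..<length w], w ! k]"

definition well_pair :: "nat \<Rightarrow> elop \<Rightarrow> elop \<Rightarrow> bool" where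
  "well_pair Nocc x y \<longleftrightarrow>
     (fst x \<and> snd x \<le> Nocc \<and> \<not> fst y \<and> snd y \<le> Nocc)
   \<or> (\<not> fst x \<and> Nocc < snd x \<and> fst y \<and> Nocc < snd y)"

definition well_contractions :: "nat \<Rightarrow> elop list \<Rightarrow> (nat \<times> nat) set set" where
  "well_contractions Nocc e =
    {M. M \<subseteq> {(p, q). p < q \<and> q < length e \<and> well_pair Nocc (e ! p) (e ! q)}
        \<and> (\<forall>r < length e. \<exists>!pr \<in> M. fst pr = r \<or> snd pr = r)}"

definition W :: "nat \<Rightarrow> exop list \<Rightarrow> nat" where
  "W Nocc C = card (well_contractions Nocc (elems C))"

end

theory Submission
  imports Defs
begin


definition mtch :: "nat set \<Rightarrow> (nat \<Rightarrow> bool) \<Rightarrow> (nat \<times> nat) set set" where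
  "mtch S P = {M. M \<subseteq> {(p, q). p < q \<and> p \<in> S \<and> q \<in> S \<and> P p \<and> \<not> P q}
      \<and> (\<forall>r\<in>S. \<exists>!pr\<in>M. fst pr = r \<or> snd pr = r)}"

lemma mtch_finite: "finite S \<Longrightarrow> finite (mtch S P)"
proof -
  assume "finite S"
  have "mtch S P \<subseteq> Pow (S \<times> S)" unfolding mtch_def by auto
  thus ?thesis using \<open>finite S\<close> by (meson finite_Pow_iff finite_SigmaI finite_subset)
qed

lemma mtch_empty: "mtch {} P = {{}}"
  unfolding mtch_def by auto

lemma mtch_split:
  assumes S: "p \<in> S" "P p" and pmax: "\<forall>x\<in>S. P x \<longrightarrow> x \<le> p"
  shows "mtch S P = (\<Union>q\<in>{q\<in>S. p < q}. insert (p, q) ` mtch (S - {p, q}) P)"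
proof
  show "mtch S P \<subseteq> (\<Union>q\<in>{q\<in>S. p < q}. insert (p, q) ` mtch (S - {p, q}) P)"
  proof
    fix M assume M: "M \<in> mtch S P"
    hence sub: "M \<subseteq> {(p, q). p < q \<and> p \<in> S \<and> q \<in> S \<and> P p \<and> \<not> P q}"
      and un: "\<forall>r\<in>S. \<exists>!pr\<in>M. fst pr = r \<or> snd pr = r" unfolding mtch_def by auto
    obtain pr where pr: "pr \<in> M" "fst pr = p \<or> snd pr = p" using un S by blast
    obtain a q where aq: "pr = (a, q)" by (cases pr)
    have "a = p" using pr aq sub S by auto
    hence pq: "(p, q) \<in> M" "p < q" "q \<in> S" using pr aq sub by auto
    define M' where "M' = M - {(p, q)}"
    have uq: "\<And>x y. (x, y) \<in> M \<Longrightarrow> x = p \<or> y = p \<Longrightarrow> (x, y) = (p, q)"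
      using un S pq(1) by (metis fst_conv snd_conv)
    have uq2: "\<And>x y. (x, y) \<in> M \<Longrightarrow> x = q \<or> y = q \<Longrightarrow> (x, y) = (p, q)"
      using un pq by (metis fst_conv snd_conv)
    have "M' \<in> mtch (S - {p, q}) P"
      unfolding mtch_def
    proof (intro CollectI conjI ballI)
      show "M' \<subseteq> {(pa, qa). pa < qa \<and> pa \<in> S - {p, q} \<and> qa \<in> S - {p, q} \<and> P pa \<and> \<not> P qa}"
      proof
        fix z assume z: "z \<in> M'"
        obtain x y where xy: "z = (x, y)" by (cases z)
        have "(x, y) \<in> M" "(x, y) \<noteq> (p, q)" using z xy M'_def by auto
        moreover have "x \<noteq> p" "y \<noteq> p" "x \<noteq> q" "y \<noteq> q"
          using uq uq2 calculation by blast+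
        moreover have "x < y \<and> x \<in> S \<and> y \<in> S \<and> P x \<and> \<not> P y" using sub calculation(1) by blast
        ultimately show "z \<in> {(pa, qa). pa < qa \<and> pa \<in> S - {p, q} \<and> qa \<in> S - {p, q} \<and> P pa \<and> \<not> P qa}"
          using xy by simp
      qed
    next
      fix r assume r: "r \<in> S - {p, q}"
      then obtain z where z: "z \<in> M" "fst z = r \<or> snd z = r"
        and zu: "\<And>z'. z' \<in> M \<Longrightarrow> fst z' = r \<or> snd z' = r \<Longrightarrow> z' = z" using un by blast
      have "z \<noteq> (p, q)" using z r by auto
      show "\<exists>!pr\<in>M'. fst pr = r \<or> snd pr = r"
      proof (rule ex1I[of _ z])
        show "z \<in> M' \<and> (fst z = r \<or> snd z = r)" using z \<open>z \<noteq> (p, q)\<close> M'_def by simp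
      next
        fix z' assume "z' \<in> M' \<and> (fst z' = r \<or> snd z' = r)"
        thus "z' = z" using zu M'_def by simp
      qed
    qed
    moreover have "M = insert (p, q) M'" using pq M'_def by auto
    ultimately show "M \<in> (\<Union>q\<in>{q\<in>S. p < q}. insert (p, q) ` mtch (S - {p, q}) P)"
      using pq by blast
  qed
next
  show "(\<Union>q\<in>{q\<in>S. p < q}. insert (p, q) ` mtch (S - {p, q}) P) \<subseteq> mtch S P"
  proof
    fix M assume "M \<in> (\<Union>q\<in>{q\<in>S. p < q}. insert (p, q) ` mtch (S - {p, q}) P)"
    then obtain q M' where q: "q \<in> S" "p < q" and M: "M = insert (p, q) M'"
      and M': "M' \<in> mtch (S - {p, q}) P" by blast
    have sub: "M' \<subseteq> {(pa, qa). pa < qa \<and> pa \<in> S - {p, q} \<and> qa \<in> S - {p, q} \<and> P pa \<and> \<not> P qa}"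
      and un: "\<forall>r\<in>S - {p, q}. \<exists>!pr\<in>M'. fst pr = r \<or> snd pr = r" using M' unfolding mtch_def by auto
    have nq: "\<not> P q" using pmax q by force
    show "M \<in> mtch S P" unfolding mtch_def
    proof (intro CollectI conjI ballI)
      show "M \<subseteq> {(p, q). p < q \<and> p \<in> S \<and> q \<in> S \<and> P p \<and> \<not> P q}"
        using M sub q nq S by auto
    next
      fix r assume r: "r \<in> S"
      show "\<exists>!pr\<in>M. fst pr = r \<or> snd pr = r"
      proof (cases "r = p \<or> r = q")
        case True
        show ?thesis
        proof (rule ex1I[of _ "(p,q)"])
          show "(p, q) \<in> M \<and> (fst (p, q) = r \<or> snd (p, q) = r)" using True M by auto
        next
          fix z assume "z \<in> M \<and> (fst z = r \<or> snd z = r)"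
          thus "z = (p, q)" using M sub True by auto
        qed
      next
        case False
        hence "r \<in> S - {p, q}" using r by auto
        then obtain z where z: "z \<in> M'" "fst z = r \<or> snd z = r"
          and zu: "\<And>z'. z' \<in> M' \<Longrightarrow> fst z' = r \<or> snd z' = r \<Longrightarrow> z' = z" using un by blast
        show ?thesis
        proof (rule ex1I[of _ z])
          show "z \<in> M \<and> (fst z = r \<or> snd z = r)" using z M by simp
        next
          fix z' assume z': "z' \<in> M \<and> (fst z' = r \<or> snd z' = r)"
          hence "z' \<noteq> (p, q)" using False by auto
          hence "z' \<in> M'" using z' M by simp
          thus "z' = z" using zu z' by simp
        qed
      qed
    qed
  qed
qed

lemma mtch_card:
  assumes "finite S" "card {x\<in>S. P x} = card {x\<in>S. \<not> P x}"
  shows "card (mtch S P) = (\<Prod>p\<in>{x\<in>S. P x}. card {q\<in>S. p < q \<and> \<not> P q} - card {q\<in>S. p < q \<and> P q})"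
  using assms
proof (induction "card S" arbitrary: S rule: less_induct)
  case less
  show ?case
  proof (cases "{x\<in>S. P x} = {}")
    case True
    hence "card {x\<in>S. P x} = 0" by (simp only: card.empty)
    hence "card {x\<in>S. \<not> P x} = 0" using less.prems(2) by linarith
    hence "{x\<in>S. \<not> P x} = {}" using less.prems(1) by simp
    hence "S = {}" using True by blast
    thus ?thesis by (simp add: mtch_empty)
  next
    case False
    define Op where "Op = {x\<in>S. P x}"
    have fO: "finite Op" using less.prems(1) Op_def by simp
    define p where "p = Max Op"
    have pO: "p \<in> Op" using fO False Op_def p_def Max_in by blast
    hence pS: "p \<in> S" "P p" using Op_def by auto
    have pmax: "\<forall>x\<in>S. P x \<longrightarrow> x \<le> p" using fO Op_def p_def by auto
    define Q where "Q = {q\<in>S. p < q}"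
    have fQ: "finite Q" using less.prems(1) Q_def by simp
    have Qc: "\<And>q. q \<in> Q \<Longrightarrow> \<not> P q" using pmax Q_def by force
    define F where "F = (\<lambda>S p. card {q\<in>S. p < q \<and> \<not> P q} - card {q\<in>S. p < q \<and> P q})"
    have step: "card (mtch (S - {p, q}) P) = (\<Prod>p'\<in>Op - {p}. F S p')" if q: "q \<in> Q" for q
    proof -
      have qS: "q \<in> S" "p < q" "\<not> P q" using q Q_def Qc by auto
      let ?S = "S - {p, q}"
      have c1: "card ?S < card S" using less.prems(1) pS qS
        by (intro psubset_card_mono) auto
      have eO: "{x\<in>?S. P x} = Op - {p}" using Op_def qS by auto
      have eC: "{x\<in>?S. \<not> P x} = {x\<in>S. \<not> P x} - {q}" using pS by auto
      have qC: "q \<in> {x\<in>S. \<not> P x}" using qS by simp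
      have "card (Op - {p}) = card Op - 1" using pO fO by (simp add: card_Diff_singleton)
      moreover have "card ({x\<in>S. \<not> P x} - {q}) = card {x\<in>S. \<not> P x} - 1"
        using qC less.prems(1) by (simp add: card_Diff_singleton)
      ultimately have "card {x\<in>?S. P x} = card {x\<in>?S. \<not> P x}"
        unfolding eO eC using less.prems(2) Op_def by simp
      hence IH: "card (mtch ?S P) = (\<Prod>p'\<in>Op - {p}. F ?S p')"
        using less.hyps[OF c1] less.prems(1) eO F_def by simp
      have "F ?S p' = F S p'" if p': "p' \<in> Op - {p}" for p'
      proof -
        have lt: "p' < p" using p' pmax Op_def by force
        have e1: "{x\<in>?S. p' < x \<and> \<not> P x} = {x\<in>S. p' < x \<and> \<not> P x} - {q}" using pS by auto
        have e2: "{x\<in>?S. p' < x \<and> P x} = {x\<in>S. p' < x \<and> P x} - {p}" using qS by auto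
        have i1: "q \<in> {x\<in>S. p' < x \<and> \<not> P x}" using qS lt by auto
        have i2: "p \<in> {x\<in>S. p' < x \<and> P x}" using pS lt by auto
        have f1: "finite {x\<in>S. p' < x \<and> \<not> P x}" "finite {x\<in>S. p' < x \<and> P x}" using less.prems(1) by auto
        have "card {x\<in>S. p' < x \<and> \<not> P x} \<noteq> 0" "card {x\<in>S. p' < x \<and> P x} \<noteq> 0"
          using i1 i2 f1 by (simp_all only: card_0_eq) blast+
        hence "card {x\<in>S. p' < x \<and> \<not> P x} \<ge> 1" "card {x\<in>S. p' < x \<and> P x} \<ge> 1" by auto
        thus ?thesis unfolding F_def e1 e2 using i1 i2 f1 by (simp add: card_Diff_singleton)
      qed
      thus ?thesis using IH by simp
    qed
    have "card (mtch S P) = card (\<Union>q\<in>Q. insert (p, q) ` mtch (S - {p, q}) P)"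
      using mtch_split[OF pS pmax] Q_def by simp
    also have "\<dots> = (\<Sum>q\<in>Q. card (insert (p, q) ` mtch (S - {p, q}) P))"
    proof (rule card_UN_disjoint[OF fQ])
      show "\<forall>i\<in>Q. finite (insert (p, i) ` mtch (S - {p, i}) P)"
        using mtch_finite less.prems(1) by simp
      show "\<forall>i\<in>Q. \<forall>j\<in>Q. i \<noteq> j \<longrightarrow> insert (p, i) ` mtch (S - {p, i}) P \<inter> insert (p, j) ` mtch (S - {p, j}) P = {}"
      proof (intro ballI impI)
        fix i j assume "i \<in> Q" "j \<in> Q" "i \<noteq> j"
        show "insert (p, i) ` mtch (S - {p, i}) P \<inter> insert (p, j) ` mtch (S - {p, j}) P = {}"
        proof (rule ccontr)
          assume "insert (p, i) ` mtch (S - {p, i}) P \<inter> insert (p, j) ` mtch (S - {p, j}) P \<noteq> {}"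
          then obtain M1 M2 where M1: "M1 \<in> mtch (S - {p, j}) P" and e: "insert (p, i) M2 = insert (p, j) M1"
            by blast
          have "(p, i) \<in> M1" using e \<open>i \<noteq> j\<close> by blast
          thus False using M1 unfolding mtch_def by auto
        qed
      qed
    qed
    also have "\<dots> = (\<Sum>q\<in>Q. card (mtch (S - {p, q}) P))"
    proof (rule sum.cong[OF refl])
      fix q assume "q \<in> Q"
      have "inj_on (insert (p, q)) (mtch (S - {p, q}) P)"
      proof (rule inj_onI)
        fix M1 M2 assume M1: "M1 \<in> mtch (S - {p, q}) P" and M2: "M2 \<in> mtch (S - {p, q}) P"
          and e: "insert (p, q) M1 = insert (p, q) M2"
        have "(p, q) \<notin> M1" "(p, q) \<notin> M2" using M1 M2 unfolding mtch_def by auto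
        thus "M1 = M2" using e by (metis insert_ident)
      qed
      thus "card (insert (p, q) ` mtch (S - {p, q}) P) = card (mtch (S - {p, q}) P)"
        by (rule card_image)
    qed
    also have "\<dots> = card Q * (\<Prod>p'\<in>Op - {p}. F S p')" using step by simp
    also have "card Q = F S p"
    proof -
      have "{q\<in>S. p < q \<and> \<not> P q} = Q" using Q_def Qc by auto
      moreover have "{q\<in>S. p < q \<and> P q} = {}" using pmax by force
      ultimately show ?thesis unfolding F_def by (simp only: card.empty diff_zero)
    qed
    also have "F S p * (\<Prod>p'\<in>Op - {p}. F S p') = (\<Prod>p'\<in>Op. F S p')"
      by (rule sym, rule prod.remove[OF fO pO])
    finally show ?thesis unfolding F_def Op_def .
  qed
qed



lemma split_card:
  fixes So Sv :: "nat set" and Po Pv :: "nat \<Rightarrow> bool"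
  assumes fin: "finite So" "finite Sv" and dis: "So \<inter> Sv = {}"
  shows "card {M. M \<subseteq> {(p, q). p < q \<and> p \<in> So \<and> q \<in> So \<and> Po p \<and> \<not> Po q}
                      \<union> {(p, q). p < q \<and> p \<in> Sv \<and> q \<in> Sv \<and> Pv p \<and> \<not> Pv q}
            \<and> (\<forall>r\<in>So \<union> Sv. \<exists>!pr\<in>M. fst pr = r \<or> snd pr = r)}
       = card (mtch So Po) * card (mtch Sv Pv)"
proof -
  define Ao where "Ao = {(p, q). p < q \<and> p \<in> So \<and> q \<in> So \<and> Po p \<and> \<not> Po q}"
  define Av where "Av = {(p, q). p < q \<and> p \<in> Sv \<and> q \<in> Sv \<and> Pv p \<and> \<not> Pv q}"
  define WC where "WC = {M. M \<subseteq> Ao \<union> Av \<and> (\<forall>r\<in>So \<union> Sv. \<exists>!pr\<in>M. fst pr = r \<or> snd pr = r)}"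
  have mo: "mtch So Po = {M. M \<subseteq> Ao \<and> (\<forall>r\<in>So. \<exists>!pr\<in>M. fst pr = r \<or> snd pr = r)}"
    unfolding mtch_def Ao_def by simp
  have mv: "mtch Sv Pv = {M. M \<subseteq> Av \<and> (\<forall>r\<in>Sv. \<exists>!pr\<in>M. fst pr = r \<or> snd pr = r)}"
    unfolding mtch_def Av_def by simp
  have AoS: "\<And>x y. (x, y) \<in> Ao \<Longrightarrow> x \<in> So \<and> y \<in> So" unfolding Ao_def by auto
  have AvS: "\<And>x y. (x, y) \<in> Av \<Longrightarrow> x \<in> Sv \<and> y \<in> Sv" unfolding Av_def by auto
  have dj: "Ao \<inter> Av = {}" using AoS AvS dis by fast
  have "WC = (\<lambda>(A, B). A \<union> B) ` (mtch So Po \<times> mtch Sv Pv)"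
  proof
    show "WC \<subseteq> (\<lambda>(A, B). A \<union> B) ` (mtch So Po \<times> mtch Sv Pv)"
    proof
      fix M assume "M \<in> WC"
      hence sub: "M \<subseteq> Ao \<union> Av" and un: "\<forall>r\<in>So \<union> Sv. \<exists>!pr\<in>M. fst pr = r \<or> snd pr = r"
        unfolding WC_def by auto
      have "M \<inter> Ao \<in> mtch So Po" unfolding mo
      proof (intro CollectI conjI ballI)
        fix r assume r: "r \<in> So"
        then obtain z where z: "z \<in> M" "fst z = r \<or> snd z = r"
          and zu: "\<And>z'. z' \<in> M \<Longrightarrow> fst z' = r \<or> snd z' = r \<Longrightarrow> z' = z" using un by blast
        have "z \<notin> Av" using z r AvS dis by (cases z) auto
        hence "z \<in> Ao" using z sub by auto
        show "\<exists>!pr\<in>M \<inter> Ao. fst pr = r \<or> snd pr = r"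
        proof (rule ex1I[of _ z])
          show "z \<in> M \<inter> Ao \<and> (fst z = r \<or> snd z = r)" using z \<open>z \<in> Ao\<close> by simp
        qed (use zu in simp)
      qed simp
      moreover have "M \<inter> Av \<in> mtch Sv Pv" unfolding mv
      proof (intro CollectI conjI ballI)
        fix r assume r: "r \<in> Sv"
        then obtain z where z: "z \<in> M" "fst z = r \<or> snd z = r"
          and zu: "\<And>z'. z' \<in> M \<Longrightarrow> fst z' = r \<or> snd z' = r \<Longrightarrow> z' = z" using un by blast
        have "z \<notin> Ao" using z r AoS dis by (cases z) auto
        hence "z \<in> Av" using z sub by auto
        show "\<exists>!pr\<in>M \<inter> Av. fst pr = r \<or> snd pr = r"
        proof (rule ex1I[of _ z])
          show "z \<in> M \<inter> Av \<and> (fst z = r \<or> snd z = r)" using z \<open>z \<in> Av\<close> by simp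
        qed (use zu in simp)
      qed simp
      moreover have "M = (M \<inter> Ao) \<union> (M \<inter> Av)" using sub by blast
      ultimately show "M \<in> (\<lambda>(A, B). A \<union> B) ` (mtch So Po \<times> mtch Sv Pv)"
        by (metis (no_types, lifting) SigmaI case_prod_conv image_eqI)
    qed
  next
    show "(\<lambda>(A, B). A \<union> B) ` (mtch So Po \<times> mtch Sv Pv) \<subseteq> WC"
    proof
      fix M assume "M \<in> (\<lambda>(A, B). A \<union> B) ` (mtch So Po \<times> mtch Sv Pv)"
      then obtain A B where A: "A \<in> mtch So Po" and B: "B \<in> mtch Sv Pv" and M: "M = A \<union> B" by auto
      have sA: "A \<subseteq> Ao" and uA: "\<forall>r\<in>So. \<exists>!pr\<in>A. fst pr = r \<or> snd pr = r" using A mo by auto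
      have sB: "B \<subseteq> Av" and uB: "\<forall>r\<in>Sv. \<exists>!pr\<in>B. fst pr = r \<or> snd pr = r" using B mv by auto
      show "M \<in> WC" unfolding WC_def
      proof (intro CollectI conjI ballI)
        show "M \<subseteq> Ao \<union> Av" using M sA sB by auto
      next
        fix r assume r: "r \<in> So \<union> Sv"
        show "\<exists>!pr\<in>M. fst pr = r \<or> snd pr = r"
        proof (cases "r \<in> So")
          case True
          then obtain z where z: "z \<in> A" "fst z = r \<or> snd z = r"
            and zu: "\<And>z'. z' \<in> A \<Longrightarrow> fst z' = r \<or> snd z' = r \<Longrightarrow> z' = z" using uA by blast
          have nB: "\<And>z'. z' \<in> B \<Longrightarrow> \<not> (fst z' = r \<or> snd z' = r)"
          proof -
            fix z' assume "z' \<in> B"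
            then obtain x y where "z' = (x, y)" "(x, y) \<in> Av" using sB by (cases z') auto
            thus "\<not> (fst z' = r \<or> snd z' = r)" using AvS True dis by auto
          qed
          show ?thesis
          proof (rule ex1I[of _ z])
            show "z \<in> M \<and> (fst z = r \<or> snd z = r)" using z M by simp
          next
            fix z' assume "z' \<in> M \<and> (fst z' = r \<or> snd z' = r)"
            thus "z' = z" using M zu nB by blast
          qed
        next
          case False
          hence rv: "r \<in> Sv" using r by simp
          then obtain z where z: "z \<in> B" "fst z = r \<or> snd z = r"
            and zu: "\<And>z'. z' \<in> B \<Longrightarrow> fst z' = r \<or> snd z' = r \<Longrightarrow> z' = z" using uB by blast
          have nA: "\<And>z'. z' \<in> A \<Longrightarrow> \<not> (fst z' = r \<or> snd z' = r)"
          proof -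
            fix z' assume "z' \<in> A"
            then obtain x y where "z' = (x, y)" "(x, y) \<in> Ao" using sA by (cases z') auto
            thus "\<not> (fst z' = r \<or> snd z' = r)" using AoS rv dis by auto
          qed
          show ?thesis
          proof (rule ex1I[of _ z])
            show "z \<in> M \<and> (fst z = r \<or> snd z = r)" using z M by simp
          next
            fix z' assume "z' \<in> M \<and> (fst z' = r \<or> snd z' = r)"
            thus "z' = z" using M zu nA by blast
          qed
        qed
      qed
    qed
  qed
  moreover have "inj_on (\<lambda>(A, B). A \<union> B) (mtch So Po \<times> mtch Sv Pv)"
  proof (rule inj_onI)
    fix x y assume x: "x \<in> mtch So Po \<times> mtch Sv Pv" and y: "y \<in> mtch So Po \<times> mtch Sv Pv"
      and e: "(case x of (A, B) \<Rightarrow> A \<union> B) = (case y of (A, B) \<Rightarrow> A \<union> B)"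
    obtain A B A' B' where xy: "x = (A, B)" "y = (A', B')" by (cases x, cases y)
    have "A \<subseteq> Ao" "B \<subseteq> Av" "A' \<subseteq> Ao" "B' \<subseteq> Av" using x y xy mo mv by auto
    moreover have "A \<union> B = A' \<union> B'" using e xy by simp
    ultimately have "A = A'" "B = B'" using dj by blast+
    thus "x = y" using xy by simp
  qed
  moreover have "finite (mtch So Po)" "finite (mtch Sv Pv)" using fin mtch_finite by auto
  ultimately have "card WC = card (mtch So Po) * card (mtch Sv Pv)"
    by (simp add: card_image card_cartesian_product)
  thus ?thesis unfolding WC_def Ao_def Av_def .
qed



lemma len_elems: "length (elems C) = 2 * length C"
proof (induction C)
  case (Cons x C) thus ?case by (cases x) (simp_all add: elems_def)
qed (simp add: elems_def)

lemma nth_elems: "p < 2 * length C \<Longrightarrow> elems C ! p = expand (C ! (p div 2)) ! (p mod 2)"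
proof (induction C arbitrary: p)
  case Nil thus ?case by simp
next
  case (Cons x C)
  have le: "length (expand x) = 2" by (cases x) auto
  have ec: "elems (x # C) = expand x @ elems C" by (simp add: elems_def)
  show ?case
  proof (cases "p < 2")
    case True thus ?thesis using ec le by (auto simp: nth_append less_2_cases_iff)
  next
    case False
    hence "p - 2 < 2 * length C" using Cons.prems by simp
    hence "elems C ! (p - 2) = expand (C ! ((p - 2) div 2)) ! ((p - 2) mod 2)" using Cons.IH by blast
    moreover have "(p - 2) div 2 = p div 2 - 1" "p div 2 \<noteq> 0" using False by auto
    moreover have "(p - 2) mod 2 = p mod 2" using False by presburger
    moreover have "(x # C) ! (p div 2) = C ! (p div 2 - 1)" using \<open>p div 2 \<noteq> 0\<close> by (simp add: nth_Cons')
    ultimately show ?thesis using ec le False by (simp add: nth_append)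
  qed
qed

lemma elems_class:
  assumes v: "\<forall>op \<in> set C. valid_exop L Nocc op" and p: "p < 2 * length C"
  shows "(snd (elems C ! p) \<le> Nocc \<and> fst (elems C ! p)) = (even p \<and> is_deexc (C ! (p div 2)))"
    and "(snd (elems C ! p) \<le> Nocc \<and> \<not> fst (elems C ! p)) = (odd p \<and> \<not> is_deexc (C ! (p div 2)))"
    and "(Nocc < snd (elems C ! p) \<and> \<not> fst (elems C ! p)) = (odd p \<and> is_deexc (C ! (p div 2)))"
    and "(Nocc < snd (elems C ! p) \<and> fst (elems C ! p)) = (even p \<and> \<not> is_deexc (C ! (p div 2)))"
proof -
  have j: "p div 2 < length C" using p by simp
  hence vj: "valid_exop L Nocc (C ! (p div 2))" using v by simp
  have e: "elems C ! p = expand (C ! (p div 2)) ! (p mod 2)" using nth_elems p by blast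
  have "p mod 2 = 0 \<or> p mod 2 = 1" by auto
  then show "(snd (elems C ! p) \<le> Nocc \<and> fst (elems C ! p)) = (even p \<and> is_deexc (C ! (p div 2)))"
    and "(snd (elems C ! p) \<le> Nocc \<and> \<not> fst (elems C ! p)) = (odd p \<and> \<not> is_deexc (C ! (p div 2)))"
    and "(Nocc < snd (elems C ! p) \<and> \<not> fst (elems C ! p)) = (odd p \<and> is_deexc (C ! (p div 2)))"
    and "(Nocc < snd (elems C ! p) \<and> fst (elems C ! p)) = (even p \<and> \<not> is_deexc (C ! (p div 2)))"
    using vj e by (cases "C ! (p div 2)"; auto simp: even_iff_mod_2_eq_zero)+
qed

lemma concat_if_map: "concat (map (\<lambda>k. if P k then [f k] else []) xs) = map f (filter P xs)"
  by (induction xs) auto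

lemma opening_depths_prod:
  "prod_list (opening_depths w) = (\<Prod>k\<in>{k. k < length w \<and> w ! k}. depth w (k + 1))"
proof -
  have "opening_depths w = map (\<lambda>k. depth w (k + 1)) (filter (\<lambda>k. w ! k) [0..<length w])"
    unfolding opening_depths_def by (simp add: concat_if_map)
  moreover have "set (filter (\<lambda>k. w ! k) [0..<length w]) = {k. k < length w \<and> w ! k}" by auto
  moreover have "(\<Prod>k\<in>set (filter (\<lambda>k. w ! k) [0..<length w]). depth w (k + 1))
     = prod_list (map (\<lambda>k. depth w (k + 1)) (filter (\<lambda>k. w ! k) [0..<length w]))"
    by (rule prod.distinct_set_conv_list) simp
  ultimately show ?thesis by simp
qed

lemma depth_card: "k \<le> length w \<Longrightarrow>
  depth w k = int (card {i. i < k \<and> w ! i}) - int (card {i. i < k \<and> \<not> w ! i})"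
  unfolding depth_def
  by (simp add: length_filter_conv_card min_absorb2 nth_take conj_commute cong: conj_cong)



theorem mainTheorem4:
  fixes L Nocc n :: nat and C :: "exop list"
  assumes "1 \<le> Nocc" and "Nocc < L" and "1 \<le> n"
    and "\<forall>op \<in> set C. valid_exop L Nocc op"
    and "length C = 2 * n"
    and "length (filter is_deexc C) = n"
    and "dyck (bracket_word C)"
  shows "int (W Nocc C) = (prod_list (opening_depths (bracket_word C)))\<^sup>2"
proof -
  note v = assms(4)
  define m where "m = length C"
  define e where "e = elems C"
  define w where "w = bracket_word C"
  have le: "length e = 2 * m" unfolding e_def m_def by (rule len_elems)
  have lw: "length w = m" unfolding w_def m_def bracket_word_def by simp
  have wn: "\<And>i. i < m \<Longrightarrow> w ! i = is_deexc (C ! i)" unfolding w_def m_def bracket_word_def by simp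
  define So where "So = {p. p < 2 * m \<and> snd (e ! p) \<le> Nocc}"
  define Sv where "Sv = {p. p < 2 * m \<and> Nocc < snd (e ! p)}"
  define Po where "Po = (\<lambda>p. fst (e ! p))"
  define Pv where "Pv = (\<lambda>p. \<not> fst (e ! p))"
  define Ds where "Ds = {j. j < m \<and> is_deexc (C ! j)}"
  define Xs where "Xs = {j. j < m \<and> \<not> is_deexc (C ! j)}"
  have cls: "\<And>p. p < 2 * m \<Longrightarrow> (snd (e ! p) \<le> Nocc \<and> fst (e ! p)) = (even p \<and> is_deexc (C ! (p div 2)))"
            "\<And>p. p < 2 * m \<Longrightarrow> (snd (e ! p) \<le> Nocc \<and> \<not> fst (e ! p)) = (odd p \<and> \<not> is_deexc (C ! (p div 2)))"
            "\<And>p. p < 2 * m \<Longrightarrow> (Nocc < snd (e ! p) \<and> \<not> fst (e ! p)) = (odd p \<and> is_deexc (C ! (p div 2)))"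
            "\<And>p. p < 2 * m \<Longrightarrow> (Nocc < snd (e ! p) \<and> fst (e ! p)) = (even p \<and> \<not> is_deexc (C ! (p div 2)))"
    using elems_class[OF v] unfolding e_def m_def by blast+
  have I1: "{x\<in>So. Po x} = (\<lambda>j. 2 * j) ` Ds"
  proof (rule set_eqI, rule iffI)
    fix x assume "x \<in> {x\<in>So. Po x}"
    hence "x < 2 * m" "even x" "is_deexc (C ! (x div 2))" using cls(1) So_def Po_def by auto
    thus "x \<in> (\<lambda>j. 2 * j) ` Ds" unfolding Ds_def by (intro image_eqI[of _ _ "x div 2"]) auto
  next
    fix x assume "x \<in> (\<lambda>j. 2 * j) ` Ds"
    then obtain j where "x = 2 * j" "j < m" "is_deexc (C ! j)" unfolding Ds_def by auto
    thus "x \<in> {x\<in>So. Po x}" using cls(1)[of x] So_def Po_def by auto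
  qed
  have I2: "{x\<in>So. \<not> Po x} = (\<lambda>j. 2 * j + 1) ` Xs"
  proof (rule set_eqI, rule iffI)
    fix x assume "x \<in> {x\<in>So. \<not> Po x}"
    hence "x < 2 * m" "odd x" "\<not> is_deexc (C ! (x div 2))" using cls(2) So_def Po_def by auto
    thus "x \<in> (\<lambda>j. 2 * j + 1) ` Xs" unfolding Xs_def by (intro image_eqI[of _ _ "x div 2"]) auto
  next
    fix x assume "x \<in> (\<lambda>j. 2 * j + 1) ` Xs"
    then obtain j where "x = 2 * j + 1" "j < m" "\<not> is_deexc (C ! j)" unfolding Xs_def by auto
    thus "x \<in> {x\<in>So. \<not> Po x}" using cls(2)[of x] So_def Po_def by auto
  qed
  have I3: "{x\<in>Sv. Pv x} = (\<lambda>j. 2 * j + 1) ` Ds"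
  proof (rule set_eqI, rule iffI)
    fix x assume "x \<in> {x\<in>Sv. Pv x}"
    hence "x < 2 * m" "odd x" "is_deexc (C ! (x div 2))" using cls(3) Sv_def Pv_def by auto
    thus "x \<in> (\<lambda>j. 2 * j + 1) ` Ds" unfolding Ds_def by (intro image_eqI[of _ _ "x div 2"]) auto
  next
    fix x assume "x \<in> (\<lambda>j. 2 * j + 1) ` Ds"
    then obtain j where "x = 2 * j + 1" "j < m" "is_deexc (C ! j)" unfolding Ds_def by auto
    thus "x \<in> {x\<in>Sv. Pv x}" using cls(3)[of x] Sv_def Pv_def by auto
  qed
  have I4: "{x\<in>Sv. \<not> Pv x} = (\<lambda>j. 2 * j) ` Xs"
  proof (rule set_eqI, rule iffI)
    fix x assume "x \<in> {x\<in>Sv. \<not> Pv x}"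
    hence "x < 2 * m" "even x" "\<not> is_deexc (C ! (x div 2))" using cls(4) Sv_def Pv_def by auto
    thus "x \<in> (\<lambda>j. 2 * j) ` Xs" unfolding Xs_def by (intro image_eqI[of _ _ "x div 2"]) auto
  next
    fix x assume "x \<in> (\<lambda>j. 2 * j) ` Xs"
    then obtain j where "x = 2 * j" "j < m" "\<not> is_deexc (C ! j)" unfolding Xs_def by auto
    thus "x \<in> {x\<in>Sv. \<not> Pv x}" using cls(4)[of x] Sv_def Pv_def by auto
  qed
  have inj1: "inj_on (\<lambda>j::nat. 2 * j) A" for A by (rule inj_onI) simp
  have inj2: "inj_on (\<lambda>j::nat. 2 * j + 1) A" for A by (rule inj_onI) simp
  have cD: "card Ds = n" using assms(6) unfolding Ds_def m_def by (simp add: length_filter_conv_card)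
  have "length (filter (\<lambda>x. \<not> is_deexc x) C) = n"
    using sum_length_filter_compl[of is_deexc C] assms(5,6) by simp
  hence cX: "card Xs = n" unfolding Xs_def m_def by (simp add: length_filter_conv_card)
  define G where "G = (\<lambda>j. card {j'\<in>Xs. j < j'} - card {j'\<in>Ds. j < j'})"
  have DX: "\<And>j. j \<in> Ds \<Longrightarrow> j \<notin> Xs" unfolding Ds_def Xs_def by auto
  have finS: "finite So" "finite Sv" unfolding So_def Sv_def by auto
  have mo: "card (mtch So Po) = (\<Prod>j\<in>Ds. G j)"
  proof -
    have bal: "card {x\<in>So. Po x} = card {x\<in>So. \<not> Po x}"
      unfolding I1 I2 using inj1 inj2 cD cX by (simp add: card_image)
    have "card (mtch So Po) = (\<Prod>p\<in>(\<lambda>j. 2 * j) ` Ds. card {q\<in>So. p < q \<and> \<not> Po q} - card {q\<in>So. p < q \<and> Po q})"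
      using mtch_card[OF finS(1) bal] unfolding I1 .
    also have "\<dots> = (\<Prod>j\<in>Ds. card {q\<in>So. 2 * j < q \<and> \<not> Po q} - card {q\<in>So. 2 * j < q \<and> Po q})"
      using prod.reindex[OF inj1] by simp
    also have "\<dots> = (\<Prod>j\<in>Ds. G j)"
    proof (rule prod.cong[OF refl])
      fix j assume j: "j \<in> Ds"
      have key: "\<And>x. x \<in> Xs \<Longrightarrow> (2 * j < 2 * x + 1) = (j < x)"
      proof -
        fix x assume "x \<in> Xs"
        hence "x \<noteq> j" using j DX by blast
        thus "(2 * j < 2 * x + 1) = (j < x)" by presburger
      qed
      have "{q\<in>So. 2 * j < q \<and> \<not> Po q} = {q\<in>{x\<in>So. \<not> Po x}. 2 * j < q}" by auto
      also have "\<dots> = (\<lambda>j. 2 * j + 1) ` {j'\<in>Xs. j < j'}" unfolding I2 using key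
        by (auto simp: image_iff)
      finally have a: "card {q\<in>So. 2 * j < q \<and> \<not> Po q} = card {j'\<in>Xs. j < j'}"
        using inj2 by (simp add: card_image)
      have "{q\<in>So. 2 * j < q \<and> Po q} = {q\<in>{x\<in>So. Po x}. 2 * j < q}" by auto
      also have "\<dots> = (\<lambda>j. 2 * j) ` {j'\<in>Ds. j < j'}" unfolding I1 by auto
      finally have b: "card {q\<in>So. 2 * j < q \<and> Po q} = card {j'\<in>Ds. j < j'}"
        using inj1 by (simp add: card_image)
      show "card {q\<in>So. 2 * j < q \<and> \<not> Po q} - card {q\<in>So. 2 * j < q \<and> Po q} = G j"
        unfolding a b G_def ..
    qed
    finally show ?thesis .
  qed
  have mv: "card (mtch Sv Pv) = (\<Prod>j\<in>Ds. G j)"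
  proof -
    have bal: "card {x\<in>Sv. Pv x} = card {x\<in>Sv. \<not> Pv x}"
      unfolding I3 I4 using inj1 inj2 cD cX by (simp add: card_image)
    have "card (mtch Sv Pv) = (\<Prod>p\<in>(\<lambda>j. 2 * j + 1) ` Ds. card {q\<in>Sv. p < q \<and> \<not> Pv q} - card {q\<in>Sv. p < q \<and> Pv q})"
      using mtch_card[OF finS(2) bal] unfolding I3 .
    also have "\<dots> = (\<Prod>j\<in>Ds. card {q\<in>Sv. 2 * j + 1 < q \<and> \<not> Pv q} - card {q\<in>Sv. 2 * j + 1 < q \<and> Pv q})"
      using prod.reindex[OF inj2] by simp
    also have "\<dots> = (\<Prod>j\<in>Ds. G j)"
    proof (rule prod.cong[OF refl])
      fix j assume j: "j \<in> Ds"
      have "{q\<in>Sv. 2 * j + 1 < q \<and> \<not> Pv q} = {q\<in>{x\<in>Sv. \<not> Pv x}. 2 * j + 1 < q}" by auto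
      also have "\<dots> = (\<lambda>j. 2 * j) ` {j'\<in>Xs. j < j'}" unfolding I4 by auto
      finally have a: "card {q\<in>Sv. 2 * j + 1 < q \<and> \<not> Pv q} = card {j'\<in>Xs. j < j'}"
        using inj1 by (simp add: card_image)
      have "{q\<in>Sv. 2 * j + 1 < q \<and> Pv q} = {q\<in>{x\<in>Sv. Pv x}. 2 * j + 1 < q}" by auto
      also have "\<dots> = (\<lambda>j. 2 * j + 1) ` {j'\<in>Ds. j < j'}" unfolding I3 by auto
      finally have b: "card {q\<in>Sv. 2 * j + 1 < q \<and> Pv q} = card {j'\<in>Ds. j < j'}"
        using inj2 by (simp add: card_image)
      show "card {q\<in>Sv. 2 * j + 1 < q \<and> \<not> Pv q} - card {q\<in>Sv. 2 * j + 1 < q \<and> Pv q} = G j"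
        unfolding a b G_def ..
    qed
    finally show ?thesis .
  qed
  have wc: "well_contractions Nocc e = {M. M \<subseteq> {(p, q). p < q \<and> p \<in> So \<and> q \<in> So \<and> Po p \<and> \<not> Po q}
                      \<union> {(p, q). p < q \<and> p \<in> Sv \<and> q \<in> Sv \<and> Pv p \<and> \<not> Pv q}
            \<and> (\<forall>r\<in>So \<union> Sv. \<exists>!pr\<in>M. fst pr = r \<or> snd pr = r)}"
  proof -
    have A: "{(p, q). p < q \<and> q < length e \<and> well_pair Nocc (e ! p) (e ! q)}
      = {(p, q). p < q \<and> p \<in> So \<and> q \<in> So \<and> Po p \<and> \<not> Po q}
                      \<union> {(p, q). p < q \<and> p \<in> Sv \<and> q \<in> Sv \<and> Pv p \<and> \<not> Pv q}"
      unfolding le So_def Sv_def Po_def Pv_def well_pair_def by auto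
    have B: "So \<union> Sv = {r. r < length e}" unfolding le So_def Sv_def by auto
    show ?thesis unfolding well_contractions_def A B by simp
  qed
  have "W Nocc C = card (mtch So Po) * card (mtch Sv Pv)"
    unfolding W_def e_def[symmetric] wc
    by (rule split_card[OF finS]) (auto simp: So_def Sv_def)
  hence W: "W Nocc C = (\<Prod>j\<in>Ds. G j) * (\<Prod>j\<in>Ds. G j)" using mo mv by simp
  have dep: "int (G j) = depth w (j + 1)" if j: "j \<in> Ds" for j
  proof -
    have jm: "j < m" using j Ds_def by simp
    have d: "depth w (j + 1) = int (card {i. i < j + 1 \<and> w ! i}) - int (card {i. i < j + 1 \<and> \<not> w ! i})"
      using depth_card[of "j + 1" w] jm lw by simp
    have e1: "{i. i < j + 1 \<and> w ! i} = {i\<in>Ds. i \<le> j}" using wn jm unfolding Ds_def by auto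
    have e2: "{i. i < j + 1 \<and> \<not> w ! i} = {i\<in>Xs. i \<le> j}" using wn jm unfolding Xs_def by auto
    have fD: "finite Ds" "finite Xs" unfolding Ds_def Xs_def by auto
    have sD: "card Ds = card {i\<in>Ds. i \<le> j} + card {i\<in>Ds. j < i}"
      proof -
      have "Ds = {i\<in>Ds. i \<le> j} \<union> {i\<in>Ds. j < i}" by auto
      hence "card Ds = card ({i\<in>Ds. i \<le> j} \<union> {i\<in>Ds. j < i})" by simp
      also have "\<dots> = card {i\<in>Ds. i \<le> j} + card {i\<in>Ds. j < i}"
        by (rule card_Un_disjoint) (use fD in auto)
      finally show ?thesis .
    qed
    have sX: "card Xs = card {i\<in>Xs. i \<le> j} + card {i\<in>Xs. j < i}"
      proof -
      have "Xs = {i\<in>Xs. i \<le> j} \<union> {i\<in>Xs. j < i}" by auto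
      hence "card Xs = card ({i\<in>Xs. i \<le> j} \<union> {i\<in>Xs. j < i})" by simp
      also have "\<dots> = card {i\<in>Xs. i \<le> j} + card {i\<in>Xs. j < i}"
        by (rule card_Un_disjoint) (use fD in auto)
      finally show ?thesis .
    qed
    have d2: "depth w (j + 1) = int (card {j'\<in>Xs. j < j'}) - int (card {j'\<in>Ds. j < j'})"
      using d e1 e2 sD sX cD cX by simp
    have "depth w (j + 1) \<ge> 0" using assms(7) jm lw unfolding dyck_def w_def[symmetric] by simp
    thus ?thesis using d2 unfolding G_def by simp
  qed
  have "prod_list (opening_depths w) = (\<Prod>k\<in>Ds. depth w (k + 1))"
  proof -
    have "{k. k < length w \<and> w ! k} = Ds" using lw wn unfolding Ds_def by auto
    thus ?thesis using opening_depths_prod[of w] by simp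
  qed
  also have "\<dots> = int (\<Prod>j\<in>Ds. G j)" using dep by simp
  finally have "prod_list (opening_depths w) = int (\<Prod>j\<in>Ds. G j)" .
  thus ?thesis using W unfolding w_def[symmetric] by (simp add: power2_eq_square)
qed

end
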